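(* Let $\alpha\ge 0$, let $\mathbf{G}\subset\mathbb{R}^2$ be a ground-truth box (a closed oriented rectangle of positive area not containing the origin) and let $\mathbf{P}\subset\mathbb{R}^2$ be an arbitrary prediction box (a closed oriented rectangle). Then $0 \le \mathsf{EC\text{-}IoU}(\mathbf{P},\mathbf{G}) \le 1$.
   Context: $\rho(x,y)=\sqrt{x^2+y^2}$ is the distance to the origin (the ego position). For a ground-truth box $\mathbf{G}$ with center $(x_{\mathbf{G}},y_{\mathbf{G}})$, define the weight $\omega_{\mathbf{G}}(x,y) = \left[\rho(x_{\mathbf{G}},y_{\mathbf{G}})/\rho(x,y)\right]^{\alpha}$ for $(x,y)\in\mathbf{G}$. For a region $\mathbf{D}\subseteq\mathbf{G}$ let $\mathsf{Weighted\text{-}Area}_{\mathbf{G}}(\mathbf{D}) = \iint_{\mathbf{D}} \omega_{\mathbf{G}}(x,y)\,dA$, and for any region $\mathbf{D}$ let $\mathsf{Area}(\mathbf{D}) = \iint_{\mathbf{D}} 1\,dA$. The Ego-Centric IoU is $$\mathsf{EC\text{-}IoU}(\mathbf{P},\mathbf{G}) = \frac{\mathsf{Weighted\text{-}Area}_{\mathbf{G}}(\mathbf{P}\cap\mathbf{G})}{\mathsf{Weighted\text{-}Area}_{\mathbf{G}}(\mathbf{G}) + \mathsf{Area}(\mathbf{P}) - \mathsf{Area}(\mathbf{P}\cap\mathbf{G})}.$$ *)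

theory Defs
  imports "HOL-Analysis.Analysis"
begin

definition rho :: "real^2 \<Rightarrow> real" where
  "rho v = sqrt ((v$1)^2 + (v$2)^2)"

definition obox :: "real^2 \<Rightarrow> real \<Rightarrow> real \<Rightarrow> real \<Rightarrow> (real^2) set" where
  "obox c a b th =
     {v. \<exists>s t. \<bar>s\<bar> \<le> a \<and> \<bar>t\<bar> \<le> b \<and>
        v = c + vector [s * cos th - t * sin th, s * sin th + t * cos th]}"

definition is_box :: "(real^2) set \<Rightarrow> bool" where
  "is_box B \<longleftrightarrow> (\<exists>c a b th. a \<ge> 0 \<and> b \<ge> 0 \<and> B = obox c a b th)"

definition is_gt_box :: "(real^2) set \<Rightarrow> bool" where
  "is_gt_box B \<longleftrightarrow> (\<exists>c a b th. a > 0 \<and> b > 0 \<and> B = obox c a b th) \<and> 0 \<notin> B"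

definition box_center :: "(real^2) set \<Rightarrow> real^2" where
  "box_center B = (SOME c. \<exists>a b th. a \<ge> 0 \<and> b \<ge> 0 \<and> B = obox c a b th)"

definition ec_weight :: "real \<Rightarrow> (real^2) set \<Rightarrow> real^2 \<Rightarrow> real" where
  "ec_weight \<alpha> G v = (rho (box_center G) / rho v) powr \<alpha>"

definition weighted_area :: "real \<Rightarrow> (real^2) set \<Rightarrow> (real^2) set \<Rightarrow> real" where
  "weighted_area \<alpha> G D = integral D (ec_weight \<alpha> G)"

definition area :: "(real^2) set \<Rightarrow> real" where
  "area D = measure lebesgue D"

definition ec_iou :: "real \<Rightarrow> (real^2) set \<Rightarrow> (real^2) set \<Rightarrow> real" where
  "ec_iou \<alpha> P G =
     weighted_area \<alpha> G (P \<inter> G) / (weighted_area \<alpha> G G + area P - area (P \<inter> G))"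

end

theory Submission
  imports Defs
begin

lemma vector2_eq: "(vector [x, y] :: real^2) = (\<chi> i. if i = 1 then x else y)"
  by (simp add: vec_eq_iff forall_2 vector_def)

lemma compact_obox: "compact (obox c a b th)"
proof -
  have "obox c a b th = (\<lambda>p. c + (\<chi> i. if i = 1 then fst p * cos th - snd p * sin th
                else fst p * sin th + snd p * cos th)) ` ({-a..a} \<times> {-b..b})"
    unfolding obox_def vector2_eq
  proof (intro set_eqI iffI)
    fix v assume "v \<in> {v. \<exists>s t. \<bar>s\<bar> \<le> a \<and> \<bar>t\<bar> \<le> b \<and> v = c + (\<chi> i. if i = 1 then s * cos th - t * sin th else s * sin th + t * cos th)}"
    then obtain s t where "\<bar>s\<bar> \<le> a" "\<bar>t\<bar> \<le> b" "v = c + (\<chi> i. if i = 1 then s * cos th - t * sin th else s * sin th + t * cos th)" by blast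
    then show "v \<in> (\<lambda>p. c + (\<chi> i. if i = 1 then fst p * cos th - snd p * sin th
                else fst p * sin th + snd p * cos th)) ` ({-a..a} \<times> {-b..b})"
      by (intro image_eqI[where x="(s,t)"]) (auto simp: abs_le_iff)
  next
    fix v assume "v \<in> (\<lambda>p. c + (\<chi> i. if i = 1 then fst p * cos th - snd p * sin th
                else fst p * sin th + snd p * cos th)) ` ({-a..a} \<times> {-b..b})"
    then obtain s t where "s \<in> {-a..a}" "t \<in> {-b..b}" "v = c + (\<chi> i. if i = 1 then s * cos th - t * sin th else s * sin th + t * cos th)" by force
    then show "v \<in> {v. \<exists>s t. \<bar>s\<bar> \<le> a \<and> \<bar>t\<bar> \<le> b \<and> v = c + (\<chi> i. if i = 1 then s * cos th - t * sin th else s * sin th + t * cos th)}"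
      by (intro CollectI exI[of _ s] exI[of _ t]) (auto simp: abs_le_iff)
  qed
  moreover have cc: "continuous_on ({-a..a} \<times> {-b..b}) (\<lambda>p. c + (\<chi> i. if i = 1 then fst p * cos th - snd p * sin th
                else fst p * sin th + snd p * cos th))"
    apply (intro continuous_intros continuous_on_vec_lambda)
    subgoal for i apply (cases "i = 1") apply simp_all
      apply (intro continuous_intros)+ done
    done
  ultimately show ?thesis
    using compact_continuous_image[OF cc compact_Times[OF compact_Icc compact_Icc]] by simp
qed

lemma cont_rho: "continuous_on S rho"
  unfolding rho_def by (intro continuous_intros)

lemma rho_pos: "v \<noteq> 0 \<Longrightarrow> rho v > 0"
  unfolding rho_def
  by (smt (verit, ccfv_threshold) exhaust_2 power2_less_eq_zero_iff real_sqrt_gt_0_iff sum_power2_ge_zero vec_eq_iff zero_index)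

lemma cont_weight:
  assumes "0 \<notin> S"
  shows "continuous_on S (ec_weight \<alpha> G)"
proof (cases "rho (box_center G) = 0")
  case True
  then show ?thesis unfolding ec_weight_def by simp
next
  case False
  have "rho (box_center G) \<ge> 0" unfolding rho_def by simp
  with False have k: "rho (box_center G) > 0" by simp
  have r: "rho x > 0" if "x \<in> S" for x using that assms rho_pos by metis
  have r2: "rho (box_center G) / rho x > 0" if "x \<in> S" for x using r[OF that] k by simp
  have r3: "\<forall>x\<in>S. rho (box_center G) / rho x \<noteq> 0" using r2 by (metis less_irrefl)
  show ?thesis unfolding ec_weight_def
    apply (intro continuous_intros cont_rho)
    using r r3 by (simp_all add: less_imp_neq[symmetric] less_imp_neq)
qed

lemma integrable_compact:
  assumes "compact S" "0 \<notin> S"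
  shows "ec_weight \<alpha> G integrable_on S"
  using set_borel_integral_eq_integral(1)[unfolded set_integrable_def,
      OF borel_integrable_compact[OF assms(1) cont_weight[OF assms(2)]]] .

lemma weight_nonneg: "ec_weight \<alpha> G v \<ge> 0"
  unfolding ec_weight_def by simp

theorem lemma2:
  fixes \<alpha> :: real and P G :: "(real^2) set"
  assumes "\<alpha> \<ge> 0"
    and "is_gt_box G"
    and "is_box P"
  shows "0 \<le> ec_iou \<alpha> P G \<and> ec_iou \<alpha> P G \<le> 1"
proof -
  have cG: "compact G" and z: "0 \<notin> G" using assms(2) compact_obox unfolding is_gt_box_def by auto
  have cP: "compact P" using assms(3) compact_obox unfolding is_box_def by auto
  have cPG: "compact (P \<inter> G)" using cG cP by (simp add: compact_Int)
  have iG: "ec_weight \<alpha> G integrable_on G" by (rule integrable_compact[OF cG z])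
  have iPG: "ec_weight \<alpha> G integrable_on (P \<inter> G)" by (rule integrable_compact[OF cPG]) (use z in auto)
  have N0: "0 \<le> weighted_area \<alpha> G (P \<inter> G)"
    unfolding weighted_area_def by (rule integral_nonneg[OF iPG]) (simp add: weight_nonneg)
  have NG: "weighted_area \<alpha> G (P \<inter> G) \<le> weighted_area \<alpha> G G"
    unfolding weighted_area_def by (rule integral_subset_le[OF _ iPG iG]) (auto simp: weight_nonneg)
  have A: "area (P \<inter> G) \<le> area P"
    unfolding area_def
    by (rule measure_mono_fmeasurable) (auto intro: lmeasurable_compact cP cPG fmeasurableD)
  have "weighted_area \<alpha> G (P \<inter> G) \<le> weighted_area \<alpha> G G + area P - area (P \<inter> G)"
    using NG A by linarith
  then show ?thesis using N0 unfolding ec_iou_def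
    by (auto simp: divide_le_eq_1 divide_nonneg_nonneg)
qed

end
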